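(* Let $Q=\{q_1,\ldots,q_n\}\subset\mathbb{P}^1$ be distinct points, $\vec g=(g_1,\ldots,g_n)$ effective divisors on $[0,1)$ of common degree $r$, and for each $i$ fix a good arrangement $a_{i,1},\ldots,a_{i,r}$ of $g_i$. Let $k_1,\ldots,k_r\in\mathbb{Z}$, $E^j=[k_j;a_{1,j},\ldots,a_{n,j}]$, $\tau_j=\#\{i: a_{i,j}\ge a_{i,j+1}\}$ and $z_j=k_{j+1}-(\tau_j+k_j+2-n)$, all indices modulo $r$. Then there exist nonzero zero-residue maps $\theta^j:E^j\to E^{j+1}\otimes\Omega^1(\log Q)$ for all $j=1,\ldots,r$ if and only if $z_j\geq0$ for all $j$; in this case $z_j$ is the number of zeros of $\theta^j$ beyond those required by the zero-residue condition. Moreover $z_1+\cdots+z_r=\delta(\vec g)$, so a choice of the $k_j$ with all $z_j\ge 0$ exists if and only if $\delta(\vec g)\geq 0$.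
   Context: $[k;a_1,\ldots,a_n]$ ($k\in\mathbb{Z}$, $a_i\in[0,1)$) is the parabolic line bundle with underlying bundle $\mathcal{O}(k)$ and weight $a_i$ at $q_i$. A zero-residue map $[k;a]\to[k';a']\otimes\Omega^1(\log Q)$ is a holomorphic map $\mathcal{O}(k)\to\mathcal{O}(k'+n-2)$ (using $\Omega^1(\log Q)\cong\mathcal{O}(n-2)$) vanishing at every $q_i$ with $a_i\geq a'_i$ (these are the required zeros). An arrangement of $g_i=\sum m_i(\alpha)[\alpha]$ is a sequence $a_{i,1},\ldots,a_{i,r}$ in $[0,1)$ containing each $\alpha$ exactly $m_i(\alpha)$ times; it is good if $\#\{t: a_{i,t}\ge a_{i,t+1}\}$ (indices mod $r$) is minimal among arrangements. The defect is $\delta(\vec g)=(n-2)r-\sum_i\max_\alpha m_i(\alpha)$. *)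

theory Defs
  imports "HOL-Computational_Algebra.Polynomial" "HOL-Library.Multiset" Complex_Main
begin

text \<open>Points of the projective line: Some z is the affine point z, None is infinity.
  A section of O(d) on P^1 (equivalently a holomorphic map O(a) to O(b) with d = b - a) is
  represented by its dehomogenisation: a complex polynomial of degree at most d
  (only the zero section if d < 0).\<close>

type_synonym P1 = "complex option"

definition section_O :: "int \<Rightarrow> complex poly \<Rightarrow> bool" where
  "section_O d p \<longleftrightarrow> (p = 0 \<or> int (degree p) \<le> d)"

definition vanishes_at :: "int \<Rightarrow> complex poly \<Rightarrow> P1 \<Rightarrow> bool" where
  "vanishes_at d p q = (case q of Some z \<Rightarrow> poly p z = 0
                                | None \<Rightarrow> (p = 0 \<or> int (degree p) < d))"

text \<open>Number of zeros (with multiplicity, on all of P^1) of a nonzero section p of O(d):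
  affine zeros counted with their order, plus the order d - deg p at infinity.\<close>
definition num_zeros :: "int \<Rightarrow> complex poly \<Rightarrow> int" where
  "num_zeros d p = int (\<Sum>z\<in>{z. poly p z = 0}. order z p) + (d - int (degree p))"

text \<open>Parabolic line bundle [k; a_1,...,a_n]: degree k, weight function (index i < n, 0-based).\<close>
type_synonym plb = "int \<times> (nat \<Rightarrow> real)"

definition hom_degree :: "P1 list \<Rightarrow> plb \<Rightarrow> plb \<Rightarrow> int" where
  "hom_degree Q E F = fst F + (int (length Q) - 2) - fst E"

definition required_zeros :: "P1 list \<Rightarrow> plb \<Rightarrow> plb \<Rightarrow> nat set" where
  "required_zeros Q E F = {i. i < length Q \<and> snd E i \<ge> snd F i}"

text \<open>Zero-residue map E \<rightarrow> F \<otimes> Omega^1(log Q), Omega^1(log Q) = O(n-2).\<close>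
definition zero_residue_map :: "P1 list \<Rightarrow> plb \<Rightarrow> plb \<Rightarrow> complex poly \<Rightarrow> bool" where
  "zero_residue_map Q E F \<theta> \<longleftrightarrow>
     section_O (hom_degree Q E F) \<theta> \<and>
     (\<forall>i\<in>required_zeros Q E F. vanishes_at (hom_degree Q E F) \<theta> (Q ! i))"

definition extra_zeros :: "P1 list \<Rightarrow> plb \<Rightarrow> plb \<Rightarrow> complex poly \<Rightarrow> int" where
  "extra_zeros Q E F \<theta> = num_zeros (hom_degree Q E F) \<theta> - int (card (required_zeros Q E F))"

definition cyc_desc :: "real list \<Rightarrow> nat" where
  "cyc_desc xs = card {t. t < length xs \<and> xs ! t \<ge> xs ! ((t + 1) mod length xs)}"

definition is_arrangement :: "real multiset \<Rightarrow> real list \<Rightarrow> bool" where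
  "is_arrangement g xs \<longleftrightarrow> mset xs = g"

definition good_arrangement :: "real multiset \<Rightarrow> real list \<Rightarrow> bool" where
  "good_arrangement g xs \<longleftrightarrow> is_arrangement g xs \<and>
     (\<forall>ys. is_arrangement g ys \<longrightarrow> cyc_desc xs \<le> cyc_desc ys)"

definition max_mult :: "real multiset \<Rightarrow> nat" where
  "max_mult g = Max (insert 0 (count g ` set_mset g))"

definition defect :: "real multiset list \<Rightarrow> nat \<Rightarrow> int" where
  "defect gs r = (int (length gs) - 2) * int r - (\<Sum>i<length gs. int (max_mult (gs ! i)))"

end

theory Submission imports Defs "HOL-Computational_Algebra.Fundamental_Theorem_Algebra"
begin

lemma sum_order_eq_degree:
  fixes p :: "complex poly" assumes "p \<noteq> 0"
  shows "(\<Sum>z\<in>{z. poly p z = 0}. order z p) = degree p"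
proof -
  have fin: "finite {z. poly p z = 0}" using assms poly_roots_finite by blast
  have "degree p = degree (smult (lead_coeff p) (\<Prod>z|poly p z = 0. [:-z, 1:] ^ order z p))"
    using complex_poly_decompose[of p] by simp
  also have "\<dots> = degree (\<Prod>z|poly p z = 0. [:-z, 1:] ^ order z p)"
    using assms by simp
  also have "\<dots> = (\<Sum>z|poly p z = 0. degree ([:-z, 1:] ^ order z p))"
    by (rule degree_prod_eq_sum_degree) simp
  also have "\<dots> = (\<Sum>z|poly p z = 0. order z p)"
    by (simp add: degree_power_eq)
  finally show ?thesis by simp
qed

lemma num_zeros_eq:
  fixes p :: "complex poly" assumes "p \<noteq> 0"
  shows "num_zeros d p = d"
  using sum_order_eq_degree[OF assms] unfolding num_zeros_def by simp

definition affs :: "P1 list \<Rightarrow> nat set \<Rightarrow> complex set" where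
  "affs Q R = {z. Some z \<in> (\<lambda>i. Q ! i) ` R}"

lemma affs_card:
  assumes "distinct Q" "R \<subseteq> {..<length Q}"
  shows "finite (affs Q R)"
    "card R = card (affs Q R) + (if None \<in> (\<lambda>i. Q ! i) ` R then 1 else 0)"
proof -
  have fR: "finite R" using assms(2) finite_subset by blast
  have inj: "inj_on (\<lambda>i. Q ! i) R"
    using assms by (meson inj_on_subset inj_on_nth lessThan_iff subsetD)
  have cR: "card ((\<lambda>i. Q ! i) ` R) = card R" using card_image[OF inj] .
  have im: "Some ` affs Q R = (\<lambda>i. Q ! i) ` R - {None}"
    unfolding affs_def by force
  have fI: "finite ((\<lambda>i. Q ! i) ` R)" using fR by simp
  have fA: "finite (Some ` affs Q R)" using im fI by simp
  then show "finite (affs Q R)" using finite_image_iff[of Some "affs Q R"] by simp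
  have cA: "card (Some ` affs Q R) = card (affs Q R)"
    by (rule card_image) (simp add: inj_on_def)
  show "card R = card (affs Q R) + (if None \<in> (\<lambda>i. Q ! i) ` R then 1 else 0)"
  proof (cases "None \<in> (\<lambda>i. Q ! i) ` R")
    case True
    then have "card ((\<lambda>i. Q ! i) ` R - {None}) = card ((\<lambda>i. Q ! i) ` R) - 1"
      using fI by simp
    moreover have "card ((\<lambda>i. Q ! i) ` R) \<ge> 1" using True fI
      by (metis card_0_eq empty_iff less_one not_le)
    ultimately show ?thesis using True im cA cR by simp
  next
    case False
    then have "(\<lambda>i. Q ! i) ` R - {None} = (\<lambda>i. Q ! i) ` R" by blast
    then show ?thesis using False im cA cR by simp
  qed
qed

lemma poly_exists:
  assumes "distinct Q" "R \<subseteq> {..<length Q}" "int (card R) \<le> d"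
  shows "\<exists>\<theta>::complex poly. \<theta> \<noteq> 0 \<and> section_O d \<theta> \<and> (\<forall>i\<in>R. vanishes_at d \<theta> (Q ! i))"
proof -
  note ac = affs_card[OF assms(1,2)]
  define \<theta> where "\<theta> = (\<Prod>z\<in>affs Q R. [:-z, 1:])"
  have nz: "\<theta> \<noteq> 0" unfolding \<theta>_def using ac(1) by (simp add: prod_zero_iff)
  have deg: "degree \<theta> = card (affs Q R)" unfolding \<theta>_def
    by (subst degree_prod_eq_sum_degree) auto
  have roots: "poly \<theta> z = 0" if "z \<in> affs Q R" for z
    unfolding \<theta>_def poly_prod using ac(1) that by (simp add: prod_zero_iff)
  have "section_O d \<theta>" unfolding section_O_def using deg ac(2) assms(3) by auto
  moreover have "vanishes_at d \<theta> (Q ! i)" if "i \<in> R" for i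
  proof (cases "Q ! i")
    case None
    then have "None \<in> (\<lambda>i. Q ! i) ` R" using that by force
    then show ?thesis using None deg ac(2) assms(3) unfolding vanishes_at_def by auto
  next
    case (Some z)
    then have "z \<in> affs Q R" unfolding affs_def using that by force
    then show ?thesis using Some roots unfolding vanishes_at_def by auto
  qed
  ultimately show ?thesis using nz by blast
qed

lemma poly_nec:
  assumes "distinct Q" "R \<subseteq> {..<length Q}" "(\<theta>::complex poly) \<noteq> 0" "section_O d \<theta>"
    "\<forall>i\<in>R. vanishes_at d \<theta> (Q ! i)"
  shows "int (card R) \<le> d"
proof -
  note ac = affs_card[OF assms(1,2)]
  have "affs Q R \<subseteq> {z. poly \<theta> z = 0}"
  proof
    fix z assume "z \<in> affs Q R"
    then obtain i where "i \<in> R" "Q ! i = Some z" unfolding affs_def by force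
    then show "z \<in> {z. poly \<theta> z = 0}" using assms(5) unfolding vanishes_at_def by force
  qed
  then have "card (affs Q R) \<le> card {z. poly \<theta> z = 0}"
    using poly_roots_finite[OF assms(3)] card_mono by blast
  also have "\<dots> \<le> degree \<theta>" using card_poly_roots_bound[OF assms(3)] .
  finally have c: "card (affs Q R) \<le> degree \<theta>" .
  have dg: "int (degree \<theta>) \<le> d" using assms(3,4) unfolding section_O_def by auto
  show ?thesis
  proof (cases "None \<in> (\<lambda>i. Q ! i) ` R")
    case True
    then obtain i where "i \<in> R" "Q ! i = None" by force
    then have "int (degree \<theta>) < d" using assms(3,5) unfolding vanishes_at_def by force
    then show ?thesis using ac(2) True c by simp
  next
    case False
    then show ?thesis using ac(2) c dg by simp
  qed
qed

fun desc :: "real list \<Rightarrow> nat" where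
  "desc (x # y # zs) = (if y \<le> x then 1 else 0) + desc (y # zs)"
| "desc _ = 0"

lemma desc_card: "card {t. Suc t < length xs \<and> xs ! Suc t \<le> xs ! t} = desc xs"
proof (induction xs rule: desc.induct)
  case (1 x y zs)
  define S where "S = {t. Suc t < length (y # zs) \<and> (y # zs) ! Suc t \<le> (y # zs) ! t}"
  have fS: "finite S" unfolding S_def by (rule finite_subset[of _ "{..<length (y#zs)}"]) auto
  have eq: "{t. Suc t < length (x # y # zs) \<and> (x # y # zs) ! Suc t \<le> (x # y # zs) ! t}
      = (if y \<le> x then {0} else {}) \<union> Suc ` S"
  proof (intro set_eqI iffI)
    fix t assume "t \<in> {t. Suc t < length (x # y # zs) \<and> (x # y # zs) ! Suc t \<le> (x # y # zs) ! t}"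
    then show "t \<in> (if y \<le> x then {0} else {}) \<union> Suc ` S"
      by (cases t) (auto simp: S_def)
  next
    fix t assume "t \<in> (if y \<le> x then {0} else {}) \<union> Suc ` S"
    then show "t \<in> {t. Suc t < length (x # y # zs) \<and> (x # y # zs) ! Suc t \<le> (x # y # zs) ! t}"
      by (auto simp: S_def split: if_splits)
  qed
  have "card ((if y \<le> x then {0} else {}) \<union> Suc ` S) = (if y \<le> x then 1 else 0) + card S"
    using fS by (auto simp: card_image)
  then show ?case using eq 1 S_def by simp
qed auto

lemma cyc_desc_eq:
  assumes "xs \<noteq> []"
  shows "cyc_desc xs = desc xs + (if hd xs \<le> last xs then 1 else 0)"
proof -
  define n where "n = length xs"
  have n0: "n > 0" using assms n_def by simp
  define S where "S = {t. Suc t < length xs \<and> xs ! Suc t \<le> xs ! t}"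
  have fS: "finite S" unfolding S_def by (rule finite_subset[of _ "{..<length xs}"]) auto
  have eq: "{t. t < length xs \<and> xs ! t \<ge> xs ! ((t + 1) mod length xs)}
     = S \<union> (if xs ! 0 \<le> xs ! (n - 1) then {n - 1} else {})"
  proof (intro set_eqI iffI)
    fix t assume "t \<in> {t. t < length xs \<and> xs ! t \<ge> xs ! ((t + 1) mod length xs)}"
    then have t: "t < n" "xs ! t \<ge> xs ! ((t + 1) mod n)" unfolding n_def by auto
    show "t \<in> S \<union> (if xs ! 0 \<le> xs ! (n - 1) then {n - 1} else {})"
    proof (cases "Suc t < n")
      case True then have "(t+1) mod n = Suc t" by simp
      then show ?thesis using t True unfolding S_def n_def by auto
    next
      case False then have "t = n - 1" "Suc t = n" using t by auto
      then have "(t+1) mod n = 0" by simp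
      then have "xs ! 0 \<le> xs ! (n - 1)" using t \<open>t = n - 1\<close> by simp
      then show ?thesis using \<open>t = n - 1\<close> by simp
    qed
  next
    fix t assume "t \<in> S \<union> (if xs ! 0 \<le> xs ! (n - 1) then {n - 1} else {})"
    then show "t \<in> {t. t < length xs \<and> xs ! t \<ge> xs ! ((t + 1) mod length xs)}"
      using n0 unfolding S_def n_def by (auto split: if_splits)
  qed
  have nS: "n - 1 \<notin> S" unfolding S_def n_def by auto
  have "cyc_desc xs = card S + (if xs ! 0 \<le> xs ! (n - 1) then 1 else 0)"
    unfolding cyc_desc_def eq using fS nS by auto
  moreover have "hd xs = xs ! 0" "last xs = xs ! (n - 1)"
    using assms n_def by (auto simp: hd_conv_nth last_conv_nth)
  ultimately show ?thesis using desc_card[of xs] S_def by simp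
qed

lemma desc_lower:
  "xs \<noteq> [] \<Longrightarrow> count (mset xs) \<alpha> + (if \<alpha> < hd xs then 1 else 0) + (if last xs < \<alpha> then 1 else 0)
     \<le> desc xs + 1"
proof (induction xs rule: desc.induct)
  case (1 x y zs)
  have IH: "count (mset (y # zs)) \<alpha> + (if \<alpha> < y then 1 else 0) + (if last (y # zs) < \<alpha> then 1 else 0)
     \<le> desc (y # zs) + 1" using 1 by simp
  then show ?case by (auto split: if_splits)
qed auto

lemma cyc_lower:
  assumes "xs \<noteq> []" shows "count (mset xs) \<alpha> \<le> cyc_desc xs"
  using desc_lower[OF assms, of \<alpha>] cyc_desc_eq[OF assms] by (auto split: if_splits)

lemma desc_append: "xs \<noteq> [] \<Longrightarrow> ys \<noteq> [] \<Longrightarrow> desc (xs @ ys) \<le> desc xs + 1 + desc ys"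
  by (induction xs rule: desc.induct) (auto simp: neq_Nil_conv)

lemma desc_sorted: "sorted_wrt (<) xs \<Longrightarrow> desc xs = 0"
  by (induction xs rule: desc.induct) auto

lemma construct:
  "\<forall>g. g \<noteq> {#} \<longrightarrow> (\<forall>v. count g v \<le> N) \<longrightarrow> 1 \<le> N \<longrightarrow> (\<exists>xs. mset xs = g \<and> desc xs + 1 \<le> N)"
proof (induction N)
  case 0 then show ?case by simp
next
  case (Suc N)
  show ?case
  proof (intro allI impI)
    fix g :: "real multiset"
    assume g0: "g \<noteq> {#}" and cnt: "\<forall>v. count g v \<le> Suc N"
    define S where "S = set_mset g"
    define L where "L = sorted_list_of_set S"
    define g' where "g' = g - mset_set S"
    have fS: "finite S" unfolding S_def by simp
    have setL: "set L = S" and dL: "distinct L" and sL: "sorted_wrt (<) L"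
      using fS unfolding L_def by (auto simp: strict_sorted_list_of_set)
    have mL: "mset L = mset_set S" using setL dL by (metis mset_set_set)
    have gsplit: "g = mset L + g'" unfolding mL g'_def S_def
      using mset_set_set_mset_msubset by (metis subset_mset.add_diff_inverse)
    have LnN: "L \<noteq> []" using setL g0 S_def by auto
    have dL0: "desc L = 0" using desc_sorted[OF sL] .
    have cg': "count g' v = count g v - (if v \<in> S then 1 else 0)" for v
      unfolding g'_def using fS by (simp add: count_mset_set)
    show "\<exists>xs. mset xs = g \<and> desc xs + 1 \<le> Suc N"
    proof (cases "g' = {#}")
      case True
      then show ?thesis using gsplit dL0 by (intro exI[of _ L]) simp
    next
      case False
      then obtain v where "v \<in># g'" by (meson multiset_nonemptyE)
      then have "count g' v > 0" by simp
      then have "1 \<le> N" using cg'[of v] cnt[rule_format, of v] by (auto simp: S_def split: if_splits)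
      moreover have "\<forall>v. count g' v \<le> N"
      proof
        fix v show "count g' v \<le> N"
          using cg'[of v] cnt[rule_format, of v] by (auto simp: S_def not_in_iff)
      qed
      ultimately obtain xs' where xs': "mset xs' = g'" "desc xs' + 1 \<le> N"
        using Suc.IH False by blast
      have "xs' \<noteq> []" using False xs' by auto
      then have "desc (L @ xs') \<le> desc L + 1 + desc xs'" using desc_append LnN by blast
      then show ?thesis using xs' gsplit dL0 by (intro exI[of _ "L @ xs'"]) simp
    qed
  qed
qed

lemma max_mult_props:
  assumes "g \<noteq> {#}"
  shows "\<forall>v. count g v \<le> max_mult g" "\<exists>\<alpha>. count g \<alpha> = max_mult g" "1 \<le> max_mult g"
proof -
  define M where "M = insert 0 (count g ` set_mset g)"
  have fM: "finite M" unfolding M_def by simp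
  show le: "\<forall>v. count g v \<le> max_mult g"
  proof
    fix v show "count g v \<le> max_mult g"
    proof (cases "v \<in># g")
      case True then show ?thesis unfolding max_mult_def using fM M_def by (intro Max_ge) auto
    next
      case False then show ?thesis by (simp add: not_in_iff)
    qed
  qed
  obtain w where w: "w \<in># g" using assms by (meson multiset_nonemptyE)
  then have "1 \<le> count g w" by (simp add: Suc_le_eq)
  then show "1 \<le> max_mult g" using le by (meson order_trans)
  have "max_mult g \<in> M" unfolding max_mult_def M_def[symmetric] using fM M_def by (intro Max_in) auto
  then show "\<exists>\<alpha>. count g \<alpha> = max_mult g" using \<open>1 \<le> max_mult g\<close> unfolding M_def by auto
qed

lemma good_cyc:
  assumes "good_arrangement g xs" "g \<noteq> {#}"
  shows "cyc_desc xs = max_mult g"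
proof -
  have m: "mset xs = g" using assms(1) unfolding good_arrangement_def is_arrangement_def by simp
  then have xn: "xs \<noteq> []" using assms(2) by auto
  note mp = max_mult_props[OF assms(2)]
  obtain \<alpha> where "count g \<alpha> = max_mult g" using mp(2) by blast
  then have ge: "max_mult g \<le> cyc_desc xs" using cyc_lower[OF xn, of \<alpha>] m by simp
  obtain ys where ys: "mset ys = g" "desc ys + 1 \<le> max_mult g"
    using construct assms(2) mp(1,3) by blast
  have yn: "ys \<noteq> []" using ys assms(2) by auto
  have "cyc_desc ys \<le> max_mult g" using cyc_desc_eq[OF yn] ys by simp
  moreover have "cyc_desc xs \<le> cyc_desc ys"
    using assms(1) ys(1) unfolding good_arrangement_def is_arrangement_def by blast
  ultimately show ?thesis using ge by simp
qed


lemma zrm_iff: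
  assumes "distinct Q"
  shows "(\<exists>\<theta>. \<theta> \<noteq> 0 \<and> zero_residue_map Q E F \<theta>) \<longleftrightarrow>
           int (card (required_zeros Q E F)) \<le> hom_degree Q E F"
proof -
  have R: "required_zeros Q E F \<subseteq> {..<length Q}" unfolding required_zeros_def by auto
  show ?thesis unfolding zero_residue_map_def
    using poly_exists[OF assms R] poly_nec[OF assms R] by blast
qed

lemma zrm_extra:
  assumes "\<theta> \<noteq> 0"
  shows "extra_zeros Q E F \<theta> = hom_degree Q E F - int (card (required_zeros Q E F))"
  unfolding extra_zeros_def num_zeros_eq[OF assms] ..

lemma card_sum_indicator:
  fixes n :: nat shows "card {i. i < n \<and> P i} = (\<Sum>i<n. if P i then 1 else 0)"
proof -
  have "card {i. i < n \<and> P i} = card {i \<in> {..<n}. P i}" by (rule arg_cong[where f=card]) auto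
  also have "\<dots> = (\<Sum>i\<in>{i \<in> {..<n}. P i}. 1)" by simp
  also have "\<dots> = (\<Sum>i<n. if P i then 1 else 0)" by (rule sum.inter_filter) simp
  finally show ?thesis .
qed

lemma sum_shift_mod:
  assumes "0 < r"
  shows "(\<Sum>j<r. (kk :: nat \<Rightarrow> int) ((j + 1) mod r)) = (\<Sum>j<r. kk j)"
proof -
  obtain r' where r: "r = Suc r'" using assms gr0_conv_Suc by blast
  have "(\<Sum>j<Suc r'. kk ((j + 1) mod Suc r')) = (\<Sum>j<r'. kk ((j + 1) mod Suc r')) + kk 0"
    by simp
  also have "(\<Sum>j<r'. kk ((j + 1) mod Suc r')) = (\<Sum>j<r'. kk (Suc j))"
    by (rule sum.cong) auto
  also have "\<dots> + kk 0 = (\<Sum>j<Suc r'. kk j)" by (subst sum.lessThan_Suc_shift) (simp add: add.commute)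
  finally show ?thesis using r by simp
qed

theorem lemma6p7:
  fixes Q :: "P1 list" and g :: "real multiset list" and a :: "real list list"
    and r :: nat and k :: "nat \<Rightarrow> int"
  assumes Qdist: "distinct Q"
    and glen: "length g = length Q"
    and rpos: "0 < r"
    and gdiv: "\<forall>i<length Q. set_mset (g ! i) \<subseteq> {0..<1} \<and> size (g ! i) = r"
    and alen: "length a = length Q"
    and agood: "\<forall>i<length Q. good_arrangement (g ! i) (a ! i)"
  defines "E \<equiv> \<lambda>(kk :: nat \<Rightarrow> int) j. (kk j, \<lambda>i. a ! i ! j)"
    and "z \<equiv> \<lambda>(kk :: nat \<Rightarrow> int) j.
               kk ((j + 1) mod r) - (int (card {i. i < length Q \<and> a ! i ! j \<ge> a ! i ! ((j + 1) mod r)}) + kk j + 2 - int (length Q))"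
  shows "((\<forall>j<r. \<exists>\<theta>. \<theta> \<noteq> 0 \<and> zero_residue_map Q (E k j) (E k ((j + 1) mod r)) \<theta>)
            \<longleftrightarrow> (\<forall>j<r. z k j \<ge> 0))
       \<and> (\<forall>j<r. \<forall>\<theta>. \<theta> \<noteq> 0 \<and> zero_residue_map Q (E k j) (E k ((j + 1) mod r)) \<theta>
              \<longrightarrow> extra_zeros Q (E k j) (E k ((j + 1) mod r)) \<theta> = z k j)
       \<and> (\<Sum>j<r. z k j) = defect g r
       \<and> ((\<exists>kk. \<forall>j<r. z kk j \<ge> 0) \<longleftrightarrow> defect g r \<ge> 0)"
proof -
  define n where "n = length Q"
  define P where "P = (\<lambda>i j. a ! i ! ((j + 1) mod r) \<le> a ! i ! j)"
  define \<tau> where "\<tau> = (\<lambda>j. card {i. i < n \<and> P i j})"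
  have zalt: "z kk j = kk ((j + 1) mod r) - kk j - int (\<tau> j) + (int n - 2)" for kk j
    unfolding z_def \<tau>_def P_def n_def by simp
  have goodi: "cyc_desc (a ! i) = max_mult (g ! i)" and leni: "length (a ! i) = r" if "i < n" for i
  proof -
    have ga: "good_arrangement (g ! i) (a ! i)" using agood that n_def by blast
    have sz: "size (g ! i) = r" using gdiv that n_def by blast
    then have "g ! i \<noteq> {#}" using rpos by auto
    then show "cyc_desc (a ! i) = max_mult (g ! i)" using good_cyc ga by blast
    show "length (a ! i) = r" using ga sz
      unfolding good_arrangement_def is_arrangement_def by (metis size_mset)
  qed
  have S2: "(\<Sum>j<r. \<tau> j) = (\<Sum>i<n. max_mult (g ! i))"
  proof -
    have "(\<Sum>j<r. \<tau> j) = (\<Sum>j<r. \<Sum>i<n. if P i j then 1 else 0)"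
      unfolding \<tau>_def by (simp add: card_sum_indicator)
    also have "\<dots> = (\<Sum>i<n. \<Sum>j<r. if P i j then 1 else 0)" by (rule sum.swap)
    also have "\<dots> = (\<Sum>i<n. card {j. j < r \<and> P i j})" by (simp add: card_sum_indicator)
    also have "\<dots> = (\<Sum>i<n. max_mult (g ! i))"
    proof (rule sum.cong)
      fix i assume "i \<in> {..<n}"
      then have "i < n" by simp
      then show "card {j. j < r \<and> P i j} = max_mult (g ! i)"
        using goodi[of i] leni[of i] unfolding cyc_desc_def P_def by simp
    qed simp
    finally show ?thesis .
  qed
  have sumz: "(\<Sum>j<r. z kk j) = defect g r" for kk
  proof -
    have "(\<Sum>j<r. z kk j) = (\<Sum>j<r. kk ((j + 1) mod r)) - (\<Sum>j<r. kk j)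
        - (\<Sum>j<r. int (\<tau> j)) + (\<Sum>j<r. (int n - 2))"
      unfolding zalt by (simp add: sum.distrib sum_subtractf)
    also have "\<dots> = int r * (int n - 2) - int (\<Sum>i<n. max_mult (g ! i))"
      using sum_shift_mod[OF rpos, of kk] S2 by (simp flip: of_nat_sum)
    finally show ?thesis unfolding defect_def glen n_def by (simp add: algebra_simps)
  qed
  have req: "required_zeros Q (E k j) (E k ((j + 1) mod r)) = {i. i < n \<and> P i j}" for j
    unfolding required_zeros_def E_def P_def n_def by auto
  have hd: "hom_degree Q (E k j) (E k ((j + 1) mod r)) - int (\<tau> j) = z k j" for j
    unfolding hom_degree_def E_def zalt \<tau>_def n_def by simp
  have part1: "(\<forall>j<r. \<exists>\<theta>. \<theta> \<noteq> 0 \<and> zero_residue_map Q (E k j) (E k ((j + 1) mod r)) \<theta>)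
            \<longleftrightarrow> (\<forall>j<r. z k j \<ge> 0)"
    using zrm_iff[OF Qdist] req hd \<tau>_def by (smt (verit))
  have part2: "\<forall>j<r. \<forall>\<theta>. \<theta> \<noteq> 0 \<and> zero_residue_map Q (E k j) (E k ((j + 1) mod r)) \<theta>
              \<longrightarrow> extra_zeros Q (E k j) (E k ((j + 1) mod r)) \<theta> = z k j"
    using zrm_extra req hd \<tau>_def by simp
  have part4: "(\<exists>kk. \<forall>j<r. z kk j \<ge> 0) \<longleftrightarrow> defect g r \<ge> 0"
  proof
    assume "\<exists>kk. \<forall>j<r. z kk j \<ge> 0"
    then obtain kk where "\<forall>j<r. z kk j \<ge> 0" by blast
    then have "(\<Sum>j<r. z kk j) \<ge> 0" by (intro sum_nonneg) auto
    then show "defect g r \<ge> 0" using sumz by simp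
  next
    assume dpos: "defect g r \<ge> 0"
    obtain r' where r: "r = Suc r'" using rpos gr0_conv_Suc by blast
    define kk where "kk = (\<lambda>j. \<Sum>t<j. int (\<tau> t) + 2 - int n)"
    have z0: "z kk j = 0" if "j < r'" for j
    proof -
      have "(j + 1) mod r = Suc j" using that r by simp
      then show ?thesis unfolding zalt kk_def by simp
    qed
    have "(\<Sum>j<r. z kk j) = (\<Sum>j<r'. z kk j) + z kk r'" using r by simp
    also have "(\<Sum>j<r'. z kk j) = 0" using z0 by simp
    finally have "z kk r' = defect g r" using sumz by simp
    then have "\<forall>j<r. z kk j \<ge> 0" using z0 dpos r by (metis less_Suc_eq order_refl)
    then show "\<exists>kk. \<forall>j<r. z kk j \<ge> 0" by blast
  qed
  show ?thesis using part1 part2 part4 sumz by blast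
qed

end
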